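(* Let $r>0$, assume $W$ satisfies (H), and let $R>2r$. Let $v\in L^\infty(\mathbb{R})$ with $v(x)=1$ for a.e. $x\ge R-r$ and $v(x)=-1$ for a.e. $x\le -R+r$. Then there exists a monotone nondecreasing function $\tilde v$ with $\tilde v=v$ in $(-\infty,-R+r)\cup(R-r,+\infty)$ and $\mathcal{E}_{(-R,R)}(\tilde v)\le\mathcal{E}_{(-R,R)}(v)$.
   Context: For an interval $I$, $\operatorname{osc}_I u:=\operatorname{ess\,sup}_I u-\operatorname{ess\,inf}_I u$. $\mathcal{E}_{(a,b)}(u):=\frac1{2r^2}\int_a^b(\operatorname{osc}_{(x-r,x+r)}u)^2dx+\int_a^bW(u(x))dx$. Assumption (H): $W\in C(\mathbb{R})$, $W(\pm1)=0<W(t)$ for $t\ne\pm1$; $W$ strictly decreasing on $(-\infty,-1)$, strictly increasing on $(1,\infty)$; $W$ even on $[-1,1]$ with unique local maximum in $[-1,1]$ at $0$. *)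

theory Defs
  imports "HOL-Analysis.Analysis" "HOL-Probability.Essential_Supremum"
begin

definition ess_sup_on :: "real set \<Rightarrow> (real \<Rightarrow> real) \<Rightarrow> ereal" where
  "ess_sup_on I u = esssup (restrict_space lebesgue I) (\<lambda>x. ereal (u x))"

definition ess_inf_on :: "real set \<Rightarrow> (real \<Rightarrow> real) \<Rightarrow> ereal" where
  "ess_inf_on I u = - esssup (restrict_space lebesgue I) (\<lambda>x. - ereal (u x))"

text \<open>Oscillation osc_I u = ess sup_I u - ess inf_I u (finite for essentially bounded u).\<close>
definition osc :: "real set \<Rightarrow> (real \<Rightarrow> real) \<Rightarrow> real" where
  "osc I u = real_of_ereal (ess_sup_on I u - ess_inf_on I u)"

text \<open>The nonlocal energy E_(a,b)(u) with parameter r and potential W;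
  both integrands are nonnegative, so nonnegative integrals are used.\<close>
definition energy :: "real \<Rightarrow> (real \<Rightarrow> real) \<Rightarrow> real \<Rightarrow> real \<Rightarrow> (real \<Rightarrow> real) \<Rightarrow> ennreal" where
  "energy r W a b u =
     (\<integral>\<^sup>+ x \<in> {a<..<b}. ennreal (1 / (2 * r\<^sup>2) * (osc {x - r<..<x + r} u)\<^sup>2) \<partial>lebesgue)
   + (\<integral>\<^sup>+ x \<in> {a<..<b}. ennreal (W (u x)) \<partial>lebesgue)"

definition hyp_H :: "(real \<Rightarrow> real) \<Rightarrow> bool" where
  "hyp_H W \<longleftrightarrow> continuous_on UNIV W
     \<and> W 1 = 0 \<and> W (-1) = 0 \<and> (\<forall>t. t \<noteq> 1 \<and> t \<noteq> -1 \<longrightarrow> W t > 0)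
     \<and> strict_antimono_on {..<-1} W \<and> strict_mono_on {1<..} W
     \<and> (\<forall>t\<in>{-1..1}. W (-t) = W t)
     \<and> (\<forall>t\<in>{-1..1}. (\<exists>e>0. \<forall>s\<in>{-1..1}. \<bar>s - t\<bar> < e \<longrightarrow> W s \<le> W t) \<longleftrightarrow> t = 0)"

end

theory Submission
  imports Defs
begin


definition esup :: "real set \<Rightarrow> (real \<Rightarrow> real) \<Rightarrow> real" where
  "esup I u = Inf {c. AE x in lebesgue. x \<in> I \<longrightarrow> u x \<le> c}"

definition einf :: "real set \<Rightarrow> (real \<Rightarrow> real) \<Rightarrow> real" where
  "einf I u = - esup I (\<lambda>x. - u x)"

definition gset :: "real set \<Rightarrow> bool" where
  "gset I \<longleftrightarrow> I \<in> sets lebesgue \<and> emeasure lebesgue I \<noteq> 0"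

definition bnd :: "real set \<Rightarrow> (real \<Rightarrow> real) \<Rightarrow> bool" where
  "bnd I u \<longleftrightarrow> (\<exists>M. AE x in lebesgue. x \<in> I \<longrightarrow> \<bar>u x\<bar> \<le> M)"

lemma gset_Ioo: "(a::real) < b \<Longrightarrow> gset {a<..<b}"
  by (simp add: gset_def)

lemma null_of_AE_False:
  assumes "J \<in> sets lebesgue" "AE x in lebesgue. x \<in> J \<longrightarrow> False"
  shows "emeasure lebesgue J = 0"
  using assms AE_iff_measurable[of J lebesgue "\<lambda>x. x \<notin> J"] by auto

lemma esup_set_props:
  assumes g: "gset I" and b: "bnd I u"
  shows "{c. AE x in lebesgue. x \<in> I \<longrightarrow> u x \<le> c} \<noteq> {}"
    and "bdd_below {c. AE x in lebesgue. x \<in> I \<longrightarrow> u x \<le> c}"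
proof -
  obtain M where M: "AE x in lebesgue. x \<in> I \<longrightarrow> \<bar>u x\<bar> \<le> M" using b bnd_def by auto
  have "AE x in lebesgue. x \<in> I \<longrightarrow> u x \<le> M" using M by eventually_elim auto
  then show "{c. AE x in lebesgue. x \<in> I \<longrightarrow> u x \<le> c} \<noteq> {}" by blast
  show "bdd_below {c. AE x in lebesgue. x \<in> I \<longrightarrow> u x \<le> c}"
  proof (rule bdd_belowI)
    fix c assume "c \<in> {c. AE x in lebesgue. x \<in> I \<longrightarrow> u x \<le> c}"
    then have c: "AE x in lebesgue. x \<in> I \<longrightarrow> u x \<le> c" by simp
    show "- M \<le> c"
    proof (rule ccontr)
      assume "\<not> - M \<le> c"
      then have "AE x in lebesgue. x \<in> I \<longrightarrow> False" using c M by eventually_elim (use \<open>\<not> - M \<le> c\<close> in auto)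
      then show False using null_of_AE_False g gset_def by auto
    qed
  qed
qed

lemma esup_least:
  assumes g: "gset I" and b: "bnd I u" and c: "AE x in lebesgue. x \<in> I \<longrightarrow> u x \<le> c"
  shows "esup I u \<le> c"
  unfolding esup_def using esup_set_props[OF g b] c by (intro cInf_lower) auto

lemma esup_upper:
  assumes g: "gset I" and b: "bnd I u"
  shows "AE x in lebesgue. x \<in> I \<longrightarrow> u x \<le> esup I u"
proof -
  let ?S = "{c. AE x in lebesgue. x \<in> I \<longrightarrow> u x \<le> c}"
  have "\<forall>n::nat. AE x in lebesgue. x \<in> I \<longrightarrow> u x \<le> esup I u + 1 / Suc n"
  proof
    fix n :: nat
    have "Inf ?S < esup I u + 1 / Suc n" unfolding esup_def by simp
    then obtain c where "c \<in> ?S" "c < esup I u + 1 / Suc n"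
      using cInf_less_iff[OF esup_set_props[OF g b]] by blast
    then show "AE x in lebesgue. x \<in> I \<longrightarrow> u x \<le> esup I u + 1 / Suc n"
      by (auto elim: eventually_mono)
  qed
  then have "AE x in lebesgue. \<forall>n::nat. x \<in> I \<longrightarrow> u x \<le> esup I u + 1 / Suc n"
    by (rule AE_all_countable[THEN iffD2])
  then show ?thesis
  proof (eventually_elim)
    case (elim x)
    show ?case
    proof
      assume xI: "x \<in> I"
      show "u x \<le> esup I u"
      proof (rule field_le_epsilon)
        fix e :: real assume "0 < e"
        then obtain n where "inverse (real (Suc n)) < e" using reals_Archimedean by blast
        moreover have "u x \<le> esup I u + 1 / real (Suc n)" using elim[rule_format, OF xI, of n] by simp
        ultimately show "u x \<le> esup I u + e" by (simp add: inverse_eq_divide)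
      qed
    qed
  qed
qed

lemma esup_ge:
  assumes g: "gset I" and b: "bnd I u" and gJ: "gset J" and JI: "J \<subseteq> I"
    and d: "AE x in lebesgue. x \<in> J \<longrightarrow> d \<le> u x"
  shows "d \<le> esup I u"
proof (rule ccontr)
  assume "\<not> d \<le> esup I u"
  then have "AE x in lebesgue. x \<in> J \<longrightarrow> False"
    using esup_upper[OF g b] d by eventually_elim (use \<open>\<not> d \<le> esup I u\<close> JI in auto)
  then show False using null_of_AE_False gJ gset_def by auto
qed

lemma bnd_neg: "bnd I u \<Longrightarrow> bnd I (\<lambda>x. - u x)"
  unfolding bnd_def by simp

lemma ess_sup_on_eq:
  assumes m: "u \<in> borel_measurable lebesgue" and g: "gset I" and b: "bnd I u"
  shows "ess_sup_on I u = ereal (esup I u)"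
proof -
  have sI: "I \<inter> space lebesgue \<in> sets lebesgue" using g gset_def by auto
  have meas: "(\<lambda>x. ereal (u x)) \<in> borel_measurable (restrict_space lebesgue I)"
    using m by (intro measurable_restrict_space1) simp
  have le: "esssup (restrict_space lebesgue I) (\<lambda>x. ereal (u x)) \<le> ereal (esup I u)"
    using esup_upper[OF g b]
    by (intro esssup_I[OF meas]) (simp add: AE_restrict_space_iff[OF sI])
  have ge: "ereal (esup I u) \<le> esssup (restrict_space lebesgue I) (\<lambda>x. ereal (u x))"
  proof (rule ccontr)
    assume "\<not> ?thesis"
    then obtain d where d1: "esssup (restrict_space lebesgue I) (\<lambda>x. ereal (u x)) < ereal d"
      and d2: "ereal d < ereal (esup I u)"
      using ereal_dense2 by (metis not_le)
    have "AE x in restrict_space lebesgue I. ereal (u x) \<le> esssup (restrict_space lebesgue I) (\<lambda>x. ereal (u x))"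
      by (rule esssup_AE)
    then have "AE x in lebesgue. x \<in> I \<longrightarrow> u x \<le> d"
      unfolding AE_restrict_space_iff[OF sI]
      by eventually_elim (use d1 in \<open>auto dest: order.strict_trans1\<close>)
    then have "esup I u \<le> d" by (rule esup_least[OF g b])
    then show False using d2 by simp
  qed
  show ?thesis unfolding ess_sup_on_def using le ge by simp
qed

lemma ess_inf_on_eq:
  assumes m: "u \<in> borel_measurable lebesgue" and g: "gset I" and b: "bnd I u"
  shows "ess_inf_on I u = ereal (einf I u)"
proof -
  have m': "(\<lambda>x. - u x) \<in> borel_measurable lebesgue" using m by simp
  have "ess_sup_on I (\<lambda>x. - u x) = ereal (esup I (\<lambda>x. - u x))"
    by (rule ess_sup_on_eq[OF m' g bnd_neg[OF b]])
  then show ?thesis unfolding ess_inf_on_def ess_sup_on_def einf_def by simp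
qed

lemma osc_eq:
  assumes m: "u \<in> borel_measurable lebesgue" and g: "gset I" and b: "bnd I u"
  shows "osc I u = esup I u - einf I u"
  unfolding osc_def ess_sup_on_eq[OF assms] ess_inf_on_eq[OF assms] by simp

lemma bnd_subset: "bnd I u \<Longrightarrow> J \<subseteq> I \<Longrightarrow> bnd J u"
proof -
  assume "bnd I u" "J \<subseteq> I"
  then obtain M where "AE x in lebesgue. x \<in> I \<longrightarrow> \<bar>u x\<bar> \<le> M" unfolding bnd_def by auto
  then have "AE x in lebesgue. x \<in> J \<longrightarrow> \<bar>u x\<bar> \<le> M" using \<open>J \<subseteq> I\<close> by (auto elim!: eventually_mono)
  then show ?thesis unfolding bnd_def by auto
qed

lemma bnd_const: "(\<And>x. \<bar>u x\<bar> \<le> M) \<Longrightarrow> bnd I u"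
  unfolding bnd_def by (intro exI[of _ M]) auto

lemma esup_mono_set:
  assumes "gset I" "gset J" "J \<subseteq> I" "bnd I u"
  shows "esup J u \<le> esup I u"
  using assms esup_upper[of I u]
  by (intro esup_least) (auto intro: bnd_subset elim!: eventually_mono)

lemma einf_lower:
  assumes g: "gset I" and b: "bnd I u"
  shows "AE x in lebesgue. x \<in> I \<longrightarrow> einf I u \<le> u x"
  using esup_upper[OF g bnd_neg[OF b]] unfolding einf_def by (auto elim!: eventually_mono)

lemma einf_greatest:
  assumes g: "gset I" and b: "bnd I u" and c: "AE x in lebesgue. x \<in> I \<longrightarrow> c \<le> u x"
  shows "c \<le> einf I u"
proof -
  have "esup I (\<lambda>x. - u x) \<le> - c"
    using c by (intro esup_least[OF g bnd_neg[OF b]]) (auto elim!: eventually_mono)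
  then show ?thesis unfolding einf_def by simp
qed

lemma einf_le:
  assumes g: "gset I" and b: "bnd I u" and gJ: "gset J" and JI: "J \<subseteq> I"
    and d: "AE x in lebesgue. x \<in> J \<longrightarrow> u x \<le> d"
  shows "einf I u \<le> d"
proof -
  have "- d \<le> esup I (\<lambda>x. - u x)"
    using d by (intro esup_ge[OF g bnd_neg[OF b] gJ JI]) (auto elim!: eventually_mono)
  then show ?thesis unfolding einf_def by simp
qed

lemma einf_mono_set:
  assumes "gset I" "gset J" "J \<subseteq> I" "bnd I u"
  shows "einf I u \<le> einf J u"
  using esup_mono_set[OF assms(1-3) bnd_neg[OF assms(4)]] unfolding einf_def by simp

lemma einf_le_esup:
  assumes g: "gset I" and b: "bnd I u"
  shows "einf I u \<le> esup I u"
  using einf_lower[OF g b] by (intro esup_ge[OF g b g]) auto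

lemma cont_R:
  assumes ab: "a < b" and b: "bnd {a<..<b} u" and d: "d < esup {a<..<b} u"
  shows "\<exists>a'. a < a' \<and> a' < b \<and> d < esup {a'<..<b} u"
proof (rule ccontr)
  assume H: "\<not> ?thesis"
  define an where "an n = a + (b - a) / (real n + 2)" for n :: nat
  have an1: "a < an n" "an n < b" for n
    unfolding an_def using ab mult_right_mono[of a b "real n"] by (auto simp: field_simps)
  have "\<forall>n. AE x in lebesgue. x \<in> {an n<..<b} \<longrightarrow> u x \<le> d"
  proof
    fix n
    have le: "esup {an n<..<b} u \<le> d" using H an1[of n] by (meson not_le)
    have sub: "{an n<..<b} \<subseteq> {a<..<b}" using an1[of n] by auto
    show "AE x in lebesgue. x \<in> {an n<..<b} \<longrightarrow> u x \<le> d"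
      using esup_upper[OF gset_Ioo[OF an1(2)[of n]] bnd_subset[OF b sub]] an1[of n] le
      by (auto elim!: eventually_mono)
  qed
  then have "AE x in lebesgue. \<forall>n. x \<in> {an n<..<b} \<longrightarrow> u x \<le> d"
    by (rule AE_all_countable[THEN iffD2])
  then have "AE x in lebesgue. x \<in> {a<..<b} \<longrightarrow> u x \<le> d"
  proof (eventually_elim)
    case (elim x)
    show ?case
    proof
      assume x: "x \<in> {a<..<b}"
      then have "0 < (x - a) / (b - a)" using ab by auto
      then obtain n where n: "inverse (real (Suc n)) < (x - a) / (b - a)" using reals_Archimedean by blast
      have "(b - a) / (real n + 2) < x - a"
      proof -
        have "(b - a) / (real n + 2) \<le> (b - a) * inverse (real (Suc n))"
          using ab by (simp add: divide_simps)
        also have "\<dots> < (b - a) * ((x - a) / (b - a))" using n ab by (intro mult_strict_left_mono) auto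
        also have "\<dots> = x - a" using ab by simp
        finally show ?thesis .
      qed
      then have "x \<in> {an n<..<b}" using x unfolding an_def by auto
      then show "u x \<le> d" using elim by auto
    qed
  qed
  then have "esup {a<..<b} u \<le> d" by (rule esup_least[OF gset_Ioo[OF ab] b])
  then show False using d by simp
qed

lemma cont_L:
  assumes ab: "a < b" and b: "bnd {a<..<b} u" and d: "d < esup {a<..<b} u"
  shows "\<exists>b'. a < b' \<and> b' < b \<and> d < esup {a<..<b'} u"
proof (rule ccontr)
  assume H: "\<not> ?thesis"
  define bn where "bn n = b - (b - a) / (real n + 2)" for n :: nat
  have bn1: "a < bn n" "bn n < b" for n
    unfolding bn_def using ab mult_right_mono[of a b "real n"] by (auto simp: field_simps)
  have "\<forall>n. AE x in lebesgue. x \<in> {a<..<bn n} \<longrightarrow> u x \<le> d"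
  proof
    fix n
    have le: "esup {a<..<bn n} u \<le> d" using H bn1[of n] by (meson not_le)
    have sub: "{a<..<bn n} \<subseteq> {a<..<b}" using bn1[of n] by auto
    show "AE x in lebesgue. x \<in> {a<..<bn n} \<longrightarrow> u x \<le> d"
      using esup_upper[OF gset_Ioo[OF bn1(1)[of n]] bnd_subset[OF b sub]] bn1[of n] le
      by (auto elim!: eventually_mono)
  qed
  then have "AE x in lebesgue. \<forall>n. x \<in> {a<..<bn n} \<longrightarrow> u x \<le> d"
    by (rule AE_all_countable[THEN iffD2])
  then have "AE x in lebesgue. x \<in> {a<..<b} \<longrightarrow> u x \<le> d"
  proof (eventually_elim)
    case (elim x)
    show ?case
    proof
      assume x: "x \<in> {a<..<b}"
      then have "0 < (b - x) / (b - a)" using ab by auto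
      then obtain n where n: "inverse (real (Suc n)) < (b - x) / (b - a)" using reals_Archimedean by blast
      have "(b - a) / (real n + 2) < b - x"
      proof -
        have "(b - a) / (real n + 2) \<le> (b - a) * inverse (real (Suc n))"
          using ab by (simp add: divide_simps)
        also have "\<dots> < (b - a) * ((b - x) / (b - a))" using n ab by (intro mult_strict_left_mono) auto
        also have "\<dots> = b - x" using ab by simp
        finally show ?thesis .
      qed
      then have "x \<in> {a<..<bn n}" using x unfolding bn_def by auto
      then show "u x \<le> d" using elim by auto
    qed
  qed
  then have "esup {a<..<b} u \<le> d" by (rule esup_least[OF gset_Ioo[OF ab] b])
  then show False using d by simp
qed



lemma W_nonneg: "hyp_H W \<Longrightarrow> 0 \<le> W t"
  unfolding hyp_H_def by (cases "t = 1 \<or> t = -1") (auto intro: less_imp_le)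

lemma W_mono01:
  assumes H: "hyp_H W" and st: "0 \<le> s" "s \<le> t" "t \<le> 1"
  shows "W t \<le> W s"
proof (rule ccontr)
  assume "\<not> W t \<le> W s"
  then have lt: "W s < W t" by simp
  have cont: "continuous_on {s..1} W" using H unfolding hyp_H_def by (auto intro: continuous_on_subset)
  obtain p where p: "p \<in> {s..1}" "\<forall>y\<in>{s..1}. W y \<le> W p"
    using continuous_attains_sup[OF compact_Icc _ cont] st by auto
  have W1: "W 1 = 0" using H hyp_H_def by auto
  have "W p \<ge> W t" using p st by auto
  then have ps: "p \<noteq> s" using lt by auto
  have "0 \<le> W s" using W_nonneg[OF H] .
  then have p1: "p \<noteq> 1" using W1 lt \<open>W p \<ge> W t\<close> by auto
  have pin: "p \<in> {-1..1}" using p st by auto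
  have loc: "\<exists>e>0. \<forall>q\<in>{-1..1}. \<bar>q - p\<bar> < e \<longrightarrow> W q \<le> W p"
  proof (intro exI[of _ "min (p - s) (1 - p)"] conjI ballI impI)
    show "0 < min (p - s) (1 - p)" using p ps p1 by auto
  next
    fix q assume "q \<in> {-1..1}" "\<bar>q - p\<bar> < min (p - s) (1 - p)"
    then have "q \<in> {s..1}" by auto
    then show "W q \<le> W p" using p by auto
  qed
  have "p = 0" using H pin loc unfolding hyp_H_def by blast
  then show False using p ps st by auto
qed

lemma W_abs:
  assumes H: "hyp_H W" and st: "\<bar>s\<bar> \<le> \<bar>t\<bar>" "\<bar>t\<bar> \<le> 1"
  shows "W t \<le> W s"
proof -
  have ev: "\<And>y. y \<in> {-1..1} \<Longrightarrow> W (-y) = W y" using H hyp_H_def by auto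
  have "W t = W \<bar>t\<bar>" using ev[of t] st by (cases "t < 0") auto
  moreover have "W s = W \<bar>s\<bar>" using ev[of s] st by (cases "s < 0") auto
  moreover have "W \<bar>t\<bar> \<le> W \<bar>s\<bar>" using W_mono01[OF H, of "\<bar>s\<bar>" "\<bar>t\<bar>"] st by auto
  ultimately show ?thesis by simp
qed

lemma W_clip:
  assumes H: "hyp_H W"
  shows "W (max (-1) (min 1 t)) \<le> W t"
proof (cases "t \<in> {-1..1}")
  case True then have "max (-1) (min 1 t) = t" by (auto simp: max_def min_def)
  then show ?thesis by simp
next
  case False
  then have "max (-1) (min 1 t) = 1 \<or> max (-1) (min 1 t) = -1" by (auto simp: max_def min_def)
  then have "W (max (-1) (min 1 t)) = 0" using H hyp_H_def by auto
  then show ?thesis using W_nonneg[OF H] by simp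
qed



lemma esup_mono_Ioo:
  assumes "a \<le> c" "d \<le> b" "c < d" "\<And>y. \<bar>u y\<bar> \<le> M"
  shows "esup {c<..<d} u \<le> esup {a<..<b} u"
  using assms by (intro esup_mono_set gset_Ioo bnd_const) auto

definition PPg :: "(real \<Rightarrow> real) \<Rightarrow> (real \<Rightarrow> real) \<Rightarrow> real \<Rightarrow> real \<Rightarrow> real \<Rightarrow> bool" where
  "PPg u u' r x0 x \<longleftrightarrow> x - r < x0 \<and> x0 < x + r
     \<and> esup {x-r<..<x+r} u' < esup {x-r<..<x0} u \<and> esup {x-r<..<x+r} u' < esup {x0<..<x+r} u"

lemma no_both:
  assumes bu: "\<And>y. \<bar>u y\<bar> \<le> 1" and bu': "\<And>y. \<bar>u' y\<bar> \<le> 1"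
    and P2: "PPg u u' r x0 x2" and P1: "PPg u' u r x0 x1"
  shows False
proof (cases "x1 \<le> x2")
  case True
  have "esup {x1-r<..<x1+r} u < esup {x0<..<x1+r} u'" using P1 unfolding PPg_def by auto
  also have "\<dots> \<le> esup {x0<..<x2+r} u'" using True P1 P2 unfolding PPg_def by (intro esup_mono_Ioo[OF _ _ _ bu']) auto
  also have "\<dots> \<le> esup {x2-r<..<x2+r} u'" using True P1 P2 unfolding PPg_def by (intro esup_mono_Ioo[OF _ _ _ bu']) auto
  also have "\<dots> < esup {x2-r<..<x0} u" using P2 unfolding PPg_def by auto
  also have "\<dots> \<le> esup {x1-r<..<x0} u" using True P1 P2 unfolding PPg_def by (intro esup_mono_Ioo[OF _ _ _ bu]) auto
  also have "\<dots> \<le> esup {x1-r<..<x1+r} u" using True P1 P2 unfolding PPg_def by (intro esup_mono_Ioo[OF _ _ _ bu]) auto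
  finally show False by simp
next
  case False
  have "esup {x2-r<..<x2+r} u' < esup {x0<..<x2+r} u" using P2 unfolding PPg_def by auto
  also have "\<dots> \<le> esup {x0<..<x1+r} u" using False P1 P2 unfolding PPg_def by (intro esup_mono_Ioo[OF _ _ _ bu]) auto
  also have "\<dots> \<le> esup {x1-r<..<x1+r} u" using False P1 P2 unfolding PPg_def by (intro esup_mono_Ioo[OF _ _ _ bu]) auto
  also have "\<dots> < esup {x1-r<..<x0} u'" using P1 unfolding PPg_def by auto
  also have "\<dots> \<le> esup {x2-r<..<x0} u'" using False P1 P2 unfolding PPg_def by (intro esup_mono_Ioo[OF _ _ _ bu']) auto
  also have "\<dots> \<le> esup {x2-r<..<x2+r} u'" using False P1 P2 unfolding PPg_def by (intro esup_mono_Ioo[OF _ _ _ bu']) auto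
  finally show False by simp
qed

lemma PPg_open:
  assumes bu: "\<And>y. \<bar>u y\<bar> \<le> 1"
  shows "open {x0. \<exists>x. PPg u u' r x0 x}"
proof (subst open_subopen, intro ballI)
  fix x0 assume "x0 \<in> {x0. \<exists>x. PPg u u' r x0 x}"
  then obtain x where P: "PPg u u' r x0 x" by auto
  let ?d = "esup {x-r<..<x+r} u'"
  have l: "x - r < x0" and rr: "x0 < x + r" using P unfolding PPg_def by auto
  obtain b' where b': "x - r < b'" "b' < x0" "?d < esup {x-r<..<b'} u"
    using cont_L[OF l bnd_const[of u 1, OF bu]] P unfolding PPg_def by blast
  obtain a' where a': "x0 < a'" "a' < x + r" "?d < esup {a'<..<x+r} u"
    using cont_R[OF rr bnd_const[of u 1, OF bu]] P unfolding PPg_def by blast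
  show "\<exists>T. open T \<and> x0 \<in> T \<and> T \<subseteq> {x0. \<exists>x. PPg u u' r x0 x}"
  proof (intro exI[of _ "{b'<..<a'}"] conjI)
    show "{b'<..<a'} \<subseteq> {x0. \<exists>x. PPg u u' r x0 x}"
    proof
      fix z assume z: "z \<in> {b'<..<a'}"
      have "esup {x-r<..<b'} u \<le> esup {x-r<..<z} u" using z b' by (intro esup_mono_Ioo[OF _ _ _ bu]) auto
      moreover have "esup {a'<..<x+r} u \<le> esup {z<..<x+r} u" using z a' by (intro esup_mono_Ioo[OF _ _ _ bu]) auto
      ultimately have "PPg u u' r z x" unfolding PPg_def using z a' b' by auto
      then show "z \<in> {x0. \<exists>x. PPg u u' r x0 x}" by auto
    qed
  qed (use a' b' in auto)
qed

lemma abs_osc: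
  assumes g: "gset I" and bu: "\<And>y. \<bar>u y\<bar> \<le> 1"
  shows "esup I (\<lambda>y. \<bar>u y\<bar>) - einf I (\<lambda>y. \<bar>u y\<bar>) \<le> esup I u - einf I u"
proof -
  have b: "bnd I u" by (rule bnd_const[of u 1, OF bu])
  have ba: "bnd I (\<lambda>y. \<bar>u y\<bar>)" using bu by (intro bnd_const[of _ 1]) auto
  let ?S = "esup I u" and ?I = "einf I u"
  have AE: "AE y in lebesgue. y \<in> I \<longrightarrow> ?I \<le> u y \<and> u y \<le> ?S"
    using esup_upper[OF g b] einf_lower[OF g b] by eventually_elim auto
  have 1: "esup I (\<lambda>y. \<bar>u y\<bar>) \<le> max ?S (- ?I)"
    using AE by (intro esup_least[OF g ba]) (auto elim!: eventually_mono)
  have 2: "max 0 (max ?I (- ?S)) \<le> einf I (\<lambda>y. \<bar>u y\<bar>)"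
    using AE by (intro einf_greatest[OF g ba]) (auto elim!: eventually_mono)
  have 3: "?I \<le> ?S" by (rule einf_le_esup[OF g b])
  show ?thesis using 1 2 3 by (auto simp: max_def split: if_splits)
qed

lemma clip_osc:
  assumes g: "gset I" and b: "bnd I u"
  shows "esup I (\<lambda>y. max (-1) (min 1 (u y))) - einf I (\<lambda>y. max (-1) (min 1 (u y))) \<le> esup I u - einf I u"
proof -
  have bc: "bnd I (\<lambda>y. max (-1) (min 1 (u y)))" by (intro bnd_const[of _ 1]) auto
  let ?S = "esup I u" and ?I = "einf I u"
  have AE: "AE y in lebesgue. y \<in> I \<longrightarrow> ?I \<le> u y \<and> u y \<le> ?S"
    using esup_upper[OF g b] einf_lower[OF g b] by eventually_elim auto
  have 1: "esup I (\<lambda>y. max (-1) (min 1 (u y))) \<le> max (-1) (min 1 ?S)"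
    using AE by (intro esup_least[OF g bc]) (auto elim!: eventually_mono simp: max_def min_def)
  have 2: "max (-1) (min 1 ?I) \<le> einf I (\<lambda>y. max (-1) (min 1 (u y)))"
    using AE by (intro einf_greatest[OF g bc]) (auto elim!: eventually_mono simp: max_def min_def)
  have 3: "?I \<le> ?S" by (rule einf_le_esup[OF g b])
  show ?thesis using 1 2 3 by (auto simp: max_def min_def split: if_splits)
qed

lemma split_esup:
  assumes gK: "gset K" and gW: "gset W" and gU: "gset U" and sub: "U \<subseteq> K \<union> W \<union> {p}"
    and bu: "\<And>y. \<bar>u y\<bar> \<le> 1"
  shows "esup U u \<le> max (esup K u) (esup W u)"
proof (intro esup_least[OF gU bnd_const[of u 1, OF bu]])
  have s: "AE y in lebesgue. y \<noteq> p" by (rule AE_completion[OF AE_lborel_singleton])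
  show "AE y in lebesgue. y \<in> U \<longrightarrow> u y \<le> max (esup K u) (esup W u)"
    using esup_upper[OF gK bnd_const[of u 1, OF bu]] esup_upper[OF gW bnd_const[of u 1, OF bu]] s
    by eventually_elim (use sub in auto)
qed

lemma run_R:
  assumes bu: "\<And>y. \<bar>w y\<bar> \<le> 1"
  shows "AE y in lebesgue. x0 < y \<longrightarrow> w y \<le> esup {x0<..<y} w"
proof -
  define e where "e y = esup {x0<..<y} w" for y
  have emono: "e s \<le> e t" if "x0 < s" "s \<le> t" for s t
    unfolding e_def using that by (intro esup_mono_Ioo[OF _ _ _ bu]) auto
  have key: "\<forall>q\<in>\<rat>. AE y in lebesgue. (x0 < y \<and> e y \<le> q) \<longrightarrow> w y \<le> q"
  proof
    fix q :: real assume "q \<in> \<rat>"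
    define Z where "Z = {y. x0 < y \<and> e y \<le> q}"
    have A1: "AE y in lebesgue. \<forall>t\<in>\<rat>. (x0 < t \<and> e t \<le> q) \<longrightarrow> (x0 < y \<and> y < t \<longrightarrow> w y \<le> q)"
    proof (rule AE_ball_countable[THEN iffD2, OF countable_rat], intro ballI)
      fix t :: real assume "t \<in> \<rat>"
      show "AE y in lebesgue. (x0 < t \<and> e t \<le> q) \<longrightarrow> (x0 < y \<and> y < t \<longrightarrow> w y \<le> q)"
      proof (cases "x0 < t \<and> e t \<le> q")
        case True
        then show ?thesis
          using esup_upper[OF gset_Ioo[of x0 t] bnd_const[of w 1, OF bu]] unfolding e_def
          by (auto elim!: eventually_mono)
      next
        case False
        then show ?thesis by (intro always_eventually) auto
      qed
    qed
    have A2: "AE y in lebesgue. y \<noteq> Sup Z" by (rule AE_completion[OF AE_lborel_singleton])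
    show "AE y in lebesgue. (x0 < y \<and> e y \<le> q) \<longrightarrow> w y \<le> q"
      using A1 A2
    proof eventually_elim
      case (elim y)
      show ?case
      proof
        assume yZ': "x0 < y \<and> e y \<le> q"
        then have yZ: "y \<in> Z" unfolding Z_def by auto
        have "\<exists>z\<in>Z. y < z"
        proof (cases "bdd_above Z")
          case True
          have "y \<le> Sup Z" by (rule cSup_upper[OF yZ True])
          then have "y < Sup Z" using elim by auto
          then show ?thesis using less_cSup_iff[of Z y] yZ True by auto
        next
          case False
          then show ?thesis unfolding bdd_above_def by (auto simp: not_le)
        qed
        then obtain z where z: "z \<in> Z" "y < z" by blast
        obtain t where t: "t \<in> \<rat>" "y < t" "t < z" using Rats_dense_in_real[OF z(2)] by blast
        have "e t \<le> e z" using emono[of t z] yZ' t by auto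
        then have "x0 < t \<and> e t \<le> q" using z yZ' t unfolding Z_def by auto
        then show "w y \<le> q" using elim t yZ' by auto
      qed
    qed
  qed
  have "AE y in lebesgue. \<forall>q\<in>\<rat>. (x0 < y \<and> e y \<le> q) \<longrightarrow> w y \<le> q"
    using key by (rule AE_ball_countable[THEN iffD2, OF countable_rat])
  then show ?thesis
  proof eventually_elim
    case (elim y)
    show ?case
    proof
      assume y: "x0 < y"
      show "w y \<le> esup {x0<..<y} w"
      proof (rule ccontr)
        assume "\<not> ?thesis"
        then have "e y < w y" unfolding e_def by simp
        then obtain q where q: "q \<in> \<rat>" "e y < q" "q < w y" using Rats_dense_in_real by blast
        then show False using elim y by auto
      qed
    qed
  qed
qed

lemma run_L:
  assumes bu: "\<And>y. \<bar>w y\<bar> \<le> 1"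
  shows "AE y in lebesgue. y < x0 \<longrightarrow> w y \<le> esup {y<..<x0} w"
proof -
  define e where "e y = esup {y<..<x0} w" for y
  have emono: "e t \<le> e s" if "t < x0" "s \<le> t" for s t
    unfolding e_def using that by (intro esup_mono_Ioo[OF _ _ _ bu]) auto
  have key: "\<forall>q\<in>\<rat>. AE y in lebesgue. (y < x0 \<and> e y \<le> q) \<longrightarrow> w y \<le> q"
  proof
    fix q :: real assume "q \<in> \<rat>"
    define Z where "Z = {y. y < x0 \<and> e y \<le> q}"
    have A1: "AE y in lebesgue. \<forall>t\<in>\<rat>. (t < x0 \<and> e t \<le> q) \<longrightarrow> (t < y \<and> y < x0 \<longrightarrow> w y \<le> q)"
    proof (rule AE_ball_countable[THEN iffD2, OF countable_rat], intro ballI)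
      fix t :: real assume "t \<in> \<rat>"
      show "AE y in lebesgue. (t < x0 \<and> e t \<le> q) \<longrightarrow> (t < y \<and> y < x0 \<longrightarrow> w y \<le> q)"
      proof (cases "t < x0 \<and> e t \<le> q")
        case True
        then show ?thesis
          using esup_upper[OF gset_Ioo[of t x0] bnd_const[of w 1, OF bu]] unfolding e_def
          by (auto elim!: eventually_mono)
      next
        case False
        then show ?thesis by (intro always_eventually) auto
      qed
    qed
    have A2: "AE y in lebesgue. y \<noteq> Inf Z" by (rule AE_completion[OF AE_lborel_singleton])
    show "AE y in lebesgue. (y < x0 \<and> e y \<le> q) \<longrightarrow> w y \<le> q"
      using A1 A2
    proof eventually_elim
      case (elim y)
      show ?case
      proof
        assume yZ': "y < x0 \<and> e y \<le> q"
        then have yZ: "y \<in> Z" unfolding Z_def by auto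
        have "\<exists>z\<in>Z. z < y"
        proof (cases "bdd_below Z")
          case True
          have "Inf Z \<le> y" by (rule cInf_lower[OF yZ True])
          then have "Inf Z < y" using elim by auto
          then show ?thesis using cInf_less_iff[of Z y] yZ True by auto
        next
          case False
          then show ?thesis unfolding bdd_below_def by (auto simp: not_le)
        qed
        then obtain z where z: "z \<in> Z" "z < y" by blast
        obtain t where t: "t \<in> \<rat>" "z < t" "t < y" using Rats_dense_in_real[OF z(2)] by blast
        have "e t \<le> e z" using emono[of t z] yZ' t by auto
        then have "t < x0 \<and> e t \<le> q" using z yZ' t unfolding Z_def by auto
        then show "w y \<le> q" using elim t yZ' by auto
      qed
    qed
  qed
  have "AE y in lebesgue. \<forall>q\<in>\<rat>. (y < x0 \<and> e y \<le> q) \<longrightarrow> w y \<le> q"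
    using key by (rule AE_ball_countable[THEN iffD2, OF countable_rat])
  then show ?thesis
  proof eventually_elim
    case (elim y)
    show ?case
    proof
      assume y: "y < x0"
      show "w y \<le> esup {y<..<x0} w"
      proof (rule ccontr)
        assume "\<not> ?thesis"
        then have "e y < w y" unfolding e_def by simp
        then obtain q where q: "q \<in> \<rat>" "e y < q" "q < w y" using Rats_dense_in_real by blast
        then show False using elim y by auto
      qed
    qed
  qed
qed



locale L21 =
  fixes r R :: real and v :: "real \<Rightarrow> real"
  assumes r: "r > 0" and RR: "R > 2 * r" and meas: "v \<in> borel_measurable lebesgue"
    and bd: "\<exists>C. AE x in lebesgue. \<bar>v x\<bar> \<le> C"
    and vR: "AE x in lebesgue. x \<ge> R - r \<longrightarrow> v x = 1"
    and vL: "AE x in lebesgue. x \<le> - R + r \<longrightarrow> v x = -1"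
begin

definition vc where "vc y = max (-1) (min 1 (v y))"
definition nvc where "nvc y = - vc y"
definition w where "w y = \<bar>vc y\<bar>"

lemma vc_b: "\<bar>vc y\<bar> \<le> 1" unfolding vc_def by auto
lemma nvc_b: "\<bar>nvc y\<bar> \<le> 1" unfolding nvc_def using vc_b by auto
lemma w_b: "\<bar>w y\<bar> \<le> 1" unfolding w_def using vc_b by auto
lemma w_nn: "0 \<le> w y" unfolding w_def by auto

lemma vcR: "AE x in lebesgue. x \<ge> R - r \<longrightarrow> vc x = 1"
  using vR by eventually_elim (auto simp: vc_def)
lemma vcL: "AE x in lebesgue. x \<le> - R + r \<longrightarrow> vc x = -1"
  using vL by eventually_elim (auto simp: vc_def)

lemma bnd_v: "bnd I v"
  using bd unfolding bnd_def by (auto elim!: eventually_mono)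

lemma einf_vc: "einf I vc = - esup I nvc"
  by (simp add: einf_def nvc_def[abs_def])

definition good where
  "good x0 \<longleftrightarrow> (\<forall>x. x - r < x0 \<and> x0 < x + r \<longrightarrow> \<not> PPg vc nvc r x0 x \<and> \<not> PPg nvc vc r x0 x)"

lemma exists_good: "\<exists>x0. - R + r \<le> x0 \<and> x0 \<le> R - r \<and> good x0"
proof (rule ccontr)
  assume H: "\<not> ?thesis"
  let ?J = "{- R + r .. R - r}"
  let ?O1 = "{x0. \<exists>x. PPg nvc vc r x0 x}"
  let ?O2 = "{x0. \<exists>x. PPg vc nvc r x0 x}"
  have o1: "open ?O1" by (rule PPg_open[OF nvc_b])
  have o2: "open ?O2" by (rule PPg_open[OF vc_b])
  have disj: "?O1 \<inter> ?O2 \<inter> ?J = {}"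
    using no_both[of vc nvc, OF vc_b nvc_b] by blast
  have cov: "?J \<subseteq> ?O1 \<union> ?O2"
  proof
    fix x0 assume "x0 \<in> ?J"
    then have "\<not> good x0" using H by auto
    then show "x0 \<in> ?O1 \<union> ?O2" unfolding good_def by blast
  qed
  have ab: "- R + r \<le> R - r" using r RR by simp
  have aO2: "- R + r \<notin> ?O2"
  proof
    assume "- R + r \<in> ?O2"
    then obtain x where P: "PPg vc nvc r (- R + r) x" by auto
    then have lt: "x - r < - R + r" "- R + r < x + r" unfolding PPg_def by auto
    have "esup {x-r<..<- R + r} vc \<le> -1"
      using vcL by (intro esup_least[OF gset_Ioo[OF lt(1)] bnd_const[of vc 1, OF vc_b]]) (auto elim!: eventually_mono)
    moreover have "-1 \<le> esup {x-r<..<x+r} nvc"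
      using lt nvc_b by (intro esup_ge[OF gset_Ioo[of "x-r" "x+r"] bnd_const[of nvc 1, OF nvc_b] gset_Ioo[of "x-r" "x+r"] subset_refl]) (auto simp: abs_le_iff)
    ultimately show False using P unfolding PPg_def by auto
  qed
  have bO1: "R - r \<notin> ?O1"
  proof
    assume "R - r \<in> ?O1"
    then obtain x where P: "PPg nvc vc r (R - r) x" by auto
    then have lt: "x - r < R - r" "R - r < x + r" unfolding PPg_def by auto
    have "esup {R - r<..<x+r} nvc \<le> -1"
      using vcR by (intro esup_least[OF gset_Ioo[OF lt(2)] bnd_const[of nvc 1, OF nvc_b]]) (auto elim!: eventually_mono simp: nvc_def)
    moreover have "-1 \<le> esup {x-r<..<x+r} vc"
      using lt vc_b by (intro esup_ge[OF gset_Ioo[of "x-r" "x+r"] bnd_const[of vc 1, OF vc_b] gset_Ioo[of "x-r" "x+r"] subset_refl]) (auto simp: abs_le_iff)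
    ultimately show False using P unfolding PPg_def by auto
  qed
  have "?O1 \<inter> ?J = {} \<or> ?O2 \<inter> ?J = {}"
    by (rule connectedD[OF connected_Icc o1 o2 disj cov])
  moreover have aJ: "- R + r \<in> ?J" and bJ: "R - r \<in> ?J" using ab by auto
  moreover have "- R + r \<in> ?O1 \<inter> ?J" using cov aJ aO2 by blast
  moreover have "R - r \<in> ?O2 \<inter> ?J" using cov bJ bO1 by blast
  ultimately show False by blast
qed

definition x0 where "x0 = (SOME x0. - R + r \<le> x0 \<and> x0 \<le> R - r \<and> good x0)"

lemma x0_props: "- R + r \<le> x0" "x0 \<le> R - r" "good x0"
  using someI_ex[OF exists_good] unfolding x0_def by auto

lemma good_ineq:
  assumes x: "x - r < x0" "x0 < x + r"
  shows "esup {x0<..<x+r} w + esup {x-r<..<x0} w \<le> esup {x-r<..<x+r} vc - einf {x-r<..<x+r} vc"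
proof -
  have nP: "\<not> PPg vc nvc r x0 x" "\<not> PPg nvc vc r x0 x" using x0_props(3) x unfolding good_def by auto
  let ?W = "{x-r<..<x+r}" and ?L = "{x-r<..<x0}" and ?R = "{x0<..<x+r}"
  have gW: "gset ?W" "gset ?L" "gset ?R" using x by (auto intro: gset_Ioo)
  have bvc: "bnd I vc" "bnd I nvc" "bnd I w" for I
    by (auto intro: bnd_const[of vc 1, OF vc_b] bnd_const[of nvc 1, OF nvc_b] bnd_const[of w 1, OF w_b])
  have wR: "esup ?R w \<le> max (esup ?R vc) (esup ?R nvc)"
    using esup_upper[OF gW(3) bvc(1)] esup_upper[OF gW(3) bvc(2)]
    by (intro esup_least[OF gW(3) bvc(3)]) (auto elim!: eventually_elim2 simp: w_def nvc_def)
  have wL: "esup ?L w \<le> max (esup ?L vc) (esup ?L nvc)"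
    using esup_upper[OF gW(2) bvc(1)] esup_upper[OF gW(2) bvc(2)]
    by (intro esup_least[OF gW(2) bvc(3)]) (auto elim!: eventually_elim2 simp: w_def nvc_def)
  have m: "esup ?R vc \<le> esup ?W vc" "esup ?L vc \<le> esup ?W vc" "esup ?R nvc \<le> esup ?W nvc" "esup ?L nvc \<le> esup ?W nvc"
    using x by (auto intro!: esup_mono_Ioo vc_b nvc_b)
  show ?thesis using nP wR wL m unfolding PPg_def einf_vc using x by (auto simp: max_def split: if_split_asm)
qed


definition vt where
  "vt y = (if y < x0 then - esup {y<..<x0} w else if y = x0 then 0 else esup {x0<..<y} w)"

lemma bw: "bnd I w" by (rule bnd_const[of w 1, OF w_b])

lemma esw: assumes "a < b" shows "0 \<le> esup {a<..<b} w" "esup {a<..<b} w \<le> 1"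
proof -
  show "0 \<le> esup {a<..<b} w"
    using w_nn by (intro esup_ge[OF gset_Ioo[OF assms] bw gset_Ioo[OF assms] subset_refl]) auto
  show "esup {a<..<b} w \<le> 1"
    using w_b by (intro esup_least[OF gset_Ioo[OF assms] bw]) (auto simp: abs_le_iff)
qed

lemma vt_b: "\<bar>vt y\<bar> \<le> 1"
  unfolding vt_def using esw by auto

lemma vt_mono: "mono vt"
proof (rule monoI)
  fix y1 y2 :: real assume le: "y1 \<le> y2"
  show "vt y1 \<le> vt y2"
  proof (cases "y2 < x0")
    case True
    then have "esup {y2<..<x0} w \<le> esup {y1<..<x0} w" using le by (intro esup_mono_Ioo[OF _ _ _ w_b]) auto
    then show ?thesis unfolding vt_def using True le by auto
  next
    case False
    then have v2: "0 \<le> vt y2" unfolding vt_def using esw by auto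
    show ?thesis
    proof (cases "y1 < x0 \<or> y1 = x0")
      case True
      then have "vt y1 \<le> 0" unfolding vt_def using esw by auto
      then show ?thesis using v2 by simp
    next
      case False
      then have "esup {x0<..<y1} w \<le> esup {x0<..<y2} w" using le by (intro esup_mono_Ioo[OF _ _ _ w_b]) auto
      then show ?thesis unfolding vt_def using False le by auto
    qed
  qed
qed

lemma vt_meas: "vt \<in> borel_measurable lebesgue"
  using vt_mono by (simp add: borel_measurable_mono measurable_completion)

lemma vt_left: assumes "y < - R + r" shows "vt y = -1"
proof -
  have y: "y < x0" using assms x0_props by auto
  have "1 \<le> esup {y<..<x0} w"
    using vcL assms x0_props
    by (intro esup_ge[OF gset_Ioo[OF y] bw gset_Ioo[OF assms]]) (auto elim!: eventually_mono simp: w_def)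
  then show ?thesis unfolding vt_def using y esw[OF y] by auto
qed

lemma vt_right: assumes "R - r < y" shows "vt y = 1"
proof -
  have y: "x0 < y" using assms x0_props by auto
  have "1 \<le> esup {x0<..<y} w"
    using vcR assms x0_props
    by (intro esup_ge[OF gset_Ioo[OF y] bw gset_Ioo[OF assms]]) (auto elim!: eventually_mono simp: w_def)
  then show ?thesis unfolding vt_def using y esw[OF y] by auto
qed

lemma vt_bd: "AE x in lebesgue. x \<in> {..< - R + r} \<union> {R - r<..} \<longrightarrow> vt x = v x"
  using vL vR by eventually_elim (auto simp: vt_left vt_right)

lemma sing: "AE y in lebesgue. y \<noteq> (c::real)" by (rule AE_completion[OF AE_lborel_singleton])

lemma vt_abs: "AE y in lebesgue. \<bar>vc y\<bar> \<le> \<bar>vt y\<bar>"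
  using run_R[of w x0, OF w_b] run_L[of w x0, OF w_b] sing[of x0]
proof eventually_elim
  case (elim y)
  show ?case
  proof (cases "y < x0")
    case True
    then show ?thesis using elim esw[OF True] unfolding vt_def w_def by auto
  next
    case False
    then have "x0 < y" using elim by auto
    then show ?thesis using elim esw[OF \<open>x0 < y\<close>] unfolding vt_def w_def by auto
  qed
qed

lemma vt_W: assumes H: "hyp_H W" shows "AE y in lebesgue. W (vt y) \<le> W (v y)"
  using vt_abs
proof eventually_elim
  case (elim y)
  have "W (vt y) \<le> W (vc y)" using W_abs[OF H elim vt_b] .
  also have "\<dots> \<le> W (v y)" unfolding vc_def by (rule W_clip[OF H])
  finally show ?case .
qed


lemma bvt: "bnd I vt" by (rule bnd_const[of vt 1, OF vt_b])

lemma ptw: "(\<And>y. y \<in> I \<Longrightarrow> P y) \<Longrightarrow> AE y in lebesgue. y \<in> I \<longrightarrow> P y"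
  by (intro always_eventually) auto

lemma key_osc:
  "esup {x-r<..<x+r} vt - einf {x-r<..<x+r} vt \<le> esup {x-r<..<x+r} vc - einf {x-r<..<x+r} vc"
proof -
  let ?W = "{x-r<..<x+r}"
  have xr: "x - r < x + r" using r by simp
  have gW: "gset ?W" by (rule gset_Ioo[OF xr])
  have wvc: "w = (\<lambda>y. \<bar>vc y\<bar>)" unfolding w_def[abs_def] ..
  have absosc: "esup ?W w - einf ?W w \<le> esup ?W vc - einf ?W vc"
    unfolding wvc by (rule abs_osc[OF gW vc_b])
  have iwsw: "einf ?W w \<le> esup ?W w" by (rule einf_le_esup[OF gW bw])
  have lowW: "einf ?W w \<le> esup {a<..<b} w" if "a < b" "max a (x-r) < min b (x+r)" for a b
  proof -
    have J: "{max a (x-r)<..<min b (x+r)} \<subseteq> ?W" "{max a (x-r)<..<min b (x+r)} \<subseteq> {a<..<b}" by auto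
    have lt: "max a (x-r) < min b (x+r)" using that by auto
    note that = that(1) that(1) that(1)
    show ?thesis
      using einf_lower[OF gW bw] J
      by (intro esup_ge[OF gset_Ioo[OF that(3)] bw gset_Ioo[OF lt] J(2)]) (auto elim!: eventually_mono)
  qed
  consider (A) "x - r < x0 \<and> x0 < x + r" | (B) "x0 \<le> x - r" | (C) "x + r \<le> x0" by linarith
  then show ?thesis
  proof cases
    case A
    have Rp: "x0 < x + r" and Lp: "x - r < x0" using A by auto
    have up: "esup ?W vt \<le> esup {x0<..<x+r} w"
    proof (intro esup_least[OF gW bvt] ptw)
      fix y assume y: "y \<in> ?W"
      show "vt y \<le> esup {x0<..<x+r} w"
      proof (cases "x0 < y")
        case True
        then show ?thesis unfolding vt_def using y by (auto intro!: esup_mono_Ioo[OF _ _ _ w_b])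
      next
        case False
        then show ?thesis unfolding vt_def using esw[OF Rp] esw[of y x0] by auto
      qed
    qed
    have lo: "- esup {x-r<..<x0} w \<le> einf ?W vt"
    proof (intro einf_greatest[OF gW bvt] ptw)
      fix y assume y: "y \<in> ?W"
      show "- esup {x-r<..<x0} w \<le> vt y"
      proof (cases "y < x0")
        case True
        then have "esup {y<..<x0} w \<le> esup {x-r<..<x0} w" using y by (intro esup_mono_Ioo[OF _ _ _ w_b]) auto
        then show ?thesis unfolding vt_def using True by auto
      next
        case False
        then show ?thesis unfolding vt_def using esw[OF Lp] esw[of x0 y] by auto
      qed
    qed
    show ?thesis using up lo good_ineq[OF Lp Rp] by linarith
  next
    case B
    have lo1: "einf ?W w \<le> einf ?W vt"
    proof (intro einf_greatest[OF gW bvt] ptw)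
      fix y assume y: "y \<in> ?W"
      then have "x0 < y" using B by auto
      then show "einf ?W w \<le> vt y" unfolding vt_def using lowW[of x0 y] y B by auto
    qed
    show ?thesis
    proof (cases "x0 = x - r")
      case True
      have up: "esup ?W vt \<le> esup ?W w"
      proof (intro esup_least[OF gW bvt] ptw)
        fix y assume y: "y \<in> ?W"
        then have "x0 < y" using B by auto
        then show "vt y \<le> esup ?W w" unfolding vt_def using y True by (auto intro!: esup_mono_Ioo[OF _ _ _ w_b])
      qed
      show ?thesis using up lo1 absosc by linarith
    next
      case False
      then have x0l: "x0 < x - r" using B by auto
      let ?S0 = "esup {x0<..<x-r} w"
      have spl: "esup {x0<..<x+r} w \<le> max ?S0 (esup ?W w)"
        using x0l xr by (intro split_esup[OF gset_Ioo gset_Ioo gset_Ioo _ w_b, of _ _ _ _ _ _ "x - r"]) auto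
      have up: "esup ?W vt \<le> max ?S0 (esup ?W w)"
      proof (intro esup_least[OF gW bvt] ptw)
        fix y assume y: "y \<in> ?W"
        then have "x0 < y" using B by auto
        then have "vt y \<le> esup {x0<..<x+r} w" unfolding vt_def using y by (auto intro!: esup_mono_Ioo[OF _ _ _ w_b])
        then show "vt y \<le> max ?S0 (esup ?W w)" using spl by linarith
      qed
      have lo2: "?S0 \<le> einf ?W vt"
      proof (intro einf_greatest[OF gW bvt] ptw)
        fix y assume y: "y \<in> ?W"
        then have "x0 < y" using B by auto
        then show "?S0 \<le> vt y" unfolding vt_def using y x0l by (auto intro!: esup_mono_Ioo[OF _ _ _ w_b])
      qed
      show ?thesis using up lo1 lo2 absosc iwsw by (auto simp: max_def split: if_split_asm)
    qed
  next
    case C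
    have up1: "esup ?W vt \<le> - einf ?W w"
    proof (intro esup_least[OF gW bvt] ptw)
      fix y assume y: "y \<in> ?W"
      then have "y < x0" using C by auto
      then show "vt y \<le> - einf ?W w" unfolding vt_def using lowW[of y x0] y C by auto
    qed
    show ?thesis
    proof (cases "x0 = x + r")
      case True
      have lo: "- esup ?W w \<le> einf ?W vt"
      proof (intro einf_greatest[OF gW bvt] ptw)
        fix y assume y: "y \<in> ?W"
        then have "y < x0" using C by auto
        moreover have "esup {y<..<x0} w \<le> esup ?W w" using y True by (intro esup_mono_Ioo[OF _ _ _ w_b]) auto
        ultimately show "- esup ?W w \<le> vt y" unfolding vt_def by auto
      qed
      show ?thesis using up1 lo absosc by linarith
    next
      case False
      then have x0l: "x + r < x0" using C by auto
      let ?S0 = "esup {x+r<..<x0} w"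
      have spl: "esup {x-r<..<x0} w \<le> max ?S0 (esup ?W w)"
        using x0l xr by (intro split_esup[OF gset_Ioo gset_Ioo gset_Ioo _ w_b, of _ _ _ _ _ _ "x + r"]) auto
      have lo: "- max ?S0 (esup ?W w) \<le> einf ?W vt"
      proof (intro einf_greatest[OF gW bvt] ptw)
        fix y assume y: "y \<in> ?W"
        then have "y < x0" using C by auto
        moreover have "esup {y<..<x0} w \<le> esup {x-r<..<x0} w" using y x0l by (intro esup_mono_Ioo[OF _ _ _ w_b]) auto
        ultimately show "- max ?S0 (esup ?W w) \<le> vt y" unfolding vt_def using spl by auto
      qed
      have up2: "esup ?W vt \<le> - ?S0"
      proof (intro esup_least[OF gW bvt] ptw)
        fix y assume y: "y \<in> ?W"
        then have "y < x0" using C by auto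
        moreover have "?S0 \<le> esup {y<..<x0} w" using y x0l by (intro esup_mono_Ioo[OF _ _ _ w_b]) auto
        ultimately show "vt y \<le> - ?S0" unfolding vt_def by auto
      qed
      show ?thesis using up1 up2 lo absosc iwsw by (auto simp: max_def split: if_split_asm)
    qed
  qed
qed


lemma osc_le: "osc {x-r<..<x+r} vt \<le> osc {x-r<..<x+r} v" "0 \<le> osc {x-r<..<x+r} vt"
proof -
  have gW: "gset {x-r<..<x+r}" using r by (intro gset_Ioo) simp
  have vc': "vc = (\<lambda>y. max (-1) (min 1 (v y)))" unfolding vc_def[abs_def] ..
  have e1: "osc {x-r<..<x+r} vt = esup {x-r<..<x+r} vt - einf {x-r<..<x+r} vt"
    by (rule osc_eq[OF vt_meas gW bvt])
  have e2: "osc {x-r<..<x+r} v = esup {x-r<..<x+r} v - einf {x-r<..<x+r} v"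
    by (rule osc_eq[OF meas gW bnd_v])
  show "osc {x-r<..<x+r} vt \<le> osc {x-r<..<x+r} v"
    using key_osc[of x] clip_osc[OF gW bnd_v] unfolding e1 e2 vc' by linarith
  show "0 \<le> osc {x-r<..<x+r} vt" unfolding e1 using einf_le_esup[OF gW bvt] by simp
qed

lemma energy_le: assumes H: "hyp_H W" shows "energy r W a b vt \<le> energy r W a b v"
  unfolding energy_def
proof (rule add_mono)
  show "(\<integral>\<^sup>+ x \<in> {a<..<b}. ennreal (1 / (2 * r\<^sup>2) * (osc {x - r<..<x + r} vt)\<^sup>2) \<partial>lebesgue)
      \<le> (\<integral>\<^sup>+ x \<in> {a<..<b}. ennreal (1 / (2 * r\<^sup>2) * (osc {x - r<..<x + r} v)\<^sup>2) \<partial>lebesgue)"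
  proof (intro nn_integral_mono mult_right_mono ennreal_leI)
    fix x
    have "(osc {x - r<..<x + r} vt)\<^sup>2 \<le> (osc {x - r<..<x + r} v)\<^sup>2"
      using osc_le[of x] by (intro power_mono) auto
    then show "1 / (2 * r\<^sup>2) * (osc {x - r<..<x + r} vt)\<^sup>2 \<le> 1 / (2 * r\<^sup>2) * (osc {x - r<..<x + r} v)\<^sup>2"
      by (intro mult_left_mono) auto
  qed auto
  show "(\<integral>\<^sup>+ x \<in> {a<..<b}. ennreal (W (vt x)) \<partial>lebesgue) \<le> (\<integral>\<^sup>+ x \<in> {a<..<b}. ennreal (W (v x)) \<partial>lebesgue)"
    using vt_W[OF H] by (intro nn_integral_mono_AE) (auto elim!: eventually_mono intro!: mult_right_mono ennreal_leI)
qed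

end

theorem lemma2p1:
  fixes r R :: real and W v :: "real \<Rightarrow> real"
  assumes "r > 0" and "hyp_H W" and "R > 2 * r"
    and "v \<in> borel_measurable lebesgue"
    and "\<exists>C. AE x in lebesgue. \<bar>v x\<bar> \<le> C"
    and "AE x in lebesgue. x \<ge> R - r \<longrightarrow> v x = 1"
    and "AE x in lebesgue. x \<le> - R + r \<longrightarrow> v x = -1"
  shows "\<exists>vt :: real \<Rightarrow> real. mono vt
           \<and> (AE x in lebesgue. x \<in> {..< - R + r} \<union> {R - r<..} \<longrightarrow> vt x = v x)
           \<and> energy r W (-R) R vt \<le> energy r W (-R) R v"
proof -
  interpret L21 r R v using assms by unfold_locales auto
  show ?thesis using vt_mono vt_bd energy_le[OF assms(2)] by blast
qed


end
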